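(* Let $J\ge 1$ be an integer, let $N_p,N_a$ be positive integers and $P_t,P_a,M,\kappa_B,\kappa_U,\kappa_I,\sigma^2$ be positive reals with $N_p\kappa_I<1$. Set $C_a=P_aN_a\kappa_U^2$ and $C_t=P_tM\kappa_B^2$, and for $l\in\{1,\dots,J\}$ define $$Q(l)=\frac{C_aC_tN_a(N_p\kappa_I)^{2(J-1)}+\sigma^2C_a(N_p\kappa_I)^{2(J-l)}}{C_t(N_p\kappa_I)^{2(l-1)}+\sigma^2}.$$ Then the optimal solution of $\max_{l\in\{1,\dots,J\}}Q(l)$ is $l_2^\star=J$.
   Context: Physical setting (for interpretation): an $M$-antenna base station with transmit power $P_t$ transfers energy to a single-antenna user over a cascaded line-of-sight path through $J$ intelligent reflecting surfaces numbered $1,\dots,J$ in order from the base station; surface $l$ is active ($N_a$ elements, per-element amplification power limit $P_a$) and the others are passive ($N_p$ elements each). $\kappa_B,\kappa_I,\kappa_U$ are the amplitude path gains of the base station–surface 1 link, each inter-surface link, and the surface $J$–user link; $\sigma^2$ is the amplification noise power per active element. With optimal beamforming, the user's received power as a function of the active surface index $l$ is $Q(l)$ above. Standing assumption: $N_p\kappa_I<1$. *)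

theory Defs
  imports Complex_Main
begin

definition Qpow :: "nat \<Rightarrow> nat \<Rightarrow> nat \<Rightarrow> real \<Rightarrow> real \<Rightarrow> real \<Rightarrow> real \<Rightarrow> real \<Rightarrow> real \<Rightarrow> real \<Rightarrow> nat \<Rightarrow> real" where
  "Qpow J Np Na Pt Pa M kB kU kI s2 l =
    (let Ca = Pa * real Na * kU^2; Ct = Pt * M * kB^2; x = real Np * kI in
     (Ca * Ct * real Na * x ^ (2 * (J - 1)) + s2 * Ca * x ^ (2 * (J - l)))
     / (Ct * x ^ (2 * (l - 1)) + s2))"

end

theory Submission
  imports Defs
begin

theorem proposition2:
  fixes J Np Na :: nat and Pt Pa M kB kU kI s2 :: real
  assumes "J \<ge> 1" and "Np > 0" and "Na > 0"
    and "Pt > 0" and "Pa > 0" and "M > 0" and "kB > 0" and "kU > 0" and "kI > 0" and "s2 > 0"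
    and "real Np * kI < 1"
  shows "J \<in> {1..J} \<and>
    (\<forall>l\<in>{1..J}. l \<noteq> J \<longrightarrow> Qpow J Np Na Pt Pa M kB kU kI s2 l < Qpow J Np Na Pt Pa M kB kU kI s2 J)"
proof -
  define Ca where "Ca = Pa * real Na * kU^2"
  define Ct where "Ct = Pt * M * kB^2"
  define x where "x = real Np * kI"
  have Ca: "Ca > 0" using assms by (simp add: Ca_def)
  have Ct: "Ct > 0" using assms by (simp add: Ct_def)
  have x0: "x > 0" using assms by (simp add: x_def)
  have x1: "x < 1" using assms by (simp add: x_def)
  have Na: "real Na > 0" using assms by simp
  have Q: "Qpow J Np Na Pt Pa M kB kU kI s2 l =
     (Ca * Ct * real Na * x ^ (2 * (J - 1)) + s2 * Ca * x ^ (2 * (J - l)))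
     / (Ct * x ^ (2 * (l - 1)) + s2)" for l
    by (simp add: Qpow_def Ca_def Ct_def x_def Let_def)
  have main: "Qpow J Np Na Pt Pa M kB kU kI s2 l < Qpow J Np Na Pt Pa M kB kU kI s2 J"
    if l: "1 \<le> l" "l \<le> J" "l \<noteq> J" for l
  proof -
    have a: "x ^ (2 * (J - l)) < 1"
      using x0 x1 l by (simp add: power_less_one_iff)
    have b: "x ^ (2 * (J - 1)) < x ^ (2 * (l - 1))"
      using x0 x1 l by (intro power_strict_decreasing) auto
    have c0: "x ^ (2 * (J - 1)) > 0" "x ^ (2 * (J - l)) > 0" using x0 by auto
    have N1: "Ca * Ct * real Na * x ^ (2 * (J - 1)) + s2 * Ca * x ^ (2 * (J - l))
           < Ca * Ct * real Na * x ^ (2 * (J - 1)) + s2 * Ca * 1"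
      using a Ca assms(10) by simp
    have N0: "0 < Ca * Ct * real Na * x ^ (2 * (J - 1)) + s2 * Ca * x ^ (2 * (J - l))"
      using Ca Ct Na c0 assms(10) by (simp add: add_pos_pos)
    have D: "Ct * x ^ (2 * (J - 1)) + s2 < Ct * x ^ (2 * (l - 1)) + s2"
      using b Ct by simp
    have D0: "0 < Ct * x ^ (2 * (J - 1)) + s2" using Ct c0 assms(10) by (simp add: add_pos_pos)
    have "(Ca * Ct * real Na * x ^ (2 * (J - 1)) + s2 * Ca * x ^ (2 * (J - l)))
     / (Ct * x ^ (2 * (l - 1)) + s2) < (Ca * Ct * real Na * x ^ (2 * (J - 1)) + s2 * Ca * 1)
     / (Ct * x ^ (2 * (J - 1)) + s2)"
      using N1 N0 D D0 by (intro frac_less) auto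
    then show ?thesis by (simp add: Q)
  qed
  show ?thesis using assms(1) main by auto
qed

end
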